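(* Let $t\ge 1$, $\alpha>0$, and $\mathbf{h}=[h_1\cdots h_t]^T\sim\mathrm{CN}(\mathbf{I}_t)$. Consider the interleaved antenna selection Scheme $\mathtt{B}$: starting with $i=1$, the transmitter trains antenna $i$ (so the receiver learns $h_i$); the receiver feeds back the single bit $\mathtt{1}$ if $|h_i|^2\ge\alpha$ and $\mathtt{0}$ otherwise; if the bit is $\mathtt{0}$ and $i<t$, set $i\leftarrow i+1$ and repeat; otherwise the process stops and the transmitter transmits using beamforming vector $\mathbf{e}_i$. Consider also the conventional antenna selection Scheme $\mathtt{A}$, which trains all $t$ antennas, feeds back $\lceil\log_2 t\rceil$ bits, and transmits with $\mathbf{e}_\tau$ where $\tau=\arg\max_i|h_i|$. Then $\mathtt{out}(\mathtt{B})=\mathtt{out}(\mathtt{A})=(1-e^{-\alpha})^t$, and $$\mathtt{tl}(\mathtt{B})=\mathtt{fr}(\mathtt{B})=e^{\alpha}\bigl(1-(1-e^{-\alpha})^t\bigr)<e^{\alpha}.$$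
   Context: $\mathbf{e}_i$ is the $i$-th standard basis vector of $\mathbb{C}^t$. For a scheme that transmits with beamforming vector $\mathbf{x}(\mathbf{h})$ (with $\|\mathbf{x}\|\le1$), the outage probability is $\mathtt{out}=\mathrm{P}(|\langle\mathbf{x}(\mathbf{h}),\mathbf{h}\rangle|^2<\alpha)$, where $\langle\mathbf{x},\mathbf{h}\rangle=\sum_i \overline{x_i}h_i$. The training length $\mathtt{tl}$ of a scheme is the expected number of antennas trained per channel state, and its feedback rate $\mathtt{fr}$ is the expected number of feedback bits sent per channel state. $\mathrm{CN}(\mathbf{I}_t)$: i.i.d. standard circularly-symmetric complex Gaussian entries. *)

theory Defs
  imports "HOL-Probability.Probability"
begin

text \<open>Vectors in C^t are modelled as functions nat => complex, only indices i < t
  being relevant (antenna i of the paper is index i-1 here).\<close>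

definition cinner :: "nat \<Rightarrow> (nat \<Rightarrow> complex) \<Rightarrow> (nat \<Rightarrow> complex) \<Rightarrow> complex" where
  "cinner t x h = (\<Sum>i<t. cnj (x i) * h i)"

definition basis_vec :: "nat \<Rightarrow> nat \<Rightarrow> complex" where
  "basis_vec i = (\<lambda>j. if j = i then 1 else 0)"

definition std_complex_gaussian_vec ::
  "'a measure \<Rightarrow> nat \<Rightarrow> ('a \<Rightarrow> nat \<Rightarrow> complex) \<Rightarrow> bool" where
  "std_complex_gaussian_vec M t h \<longleftrightarrow>
     prob_space.indep_vars M (\<lambda>_. borel)
       (\<lambda>(i, b) \<omega>. if b then Re (h \<omega> i) else Im (h \<omega> i)) ({..<t} \<times> UNIV) \<and>
     (\<forall>i<t. distributed M lborel (\<lambda>\<omega>. Re (h \<omega> i)) (\<lambda>x. ennreal (normal_density 0 (sqrt (1/2)) x)) \<and>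
            distributed M lborel (\<lambda>\<omega>. Im (h \<omega> i)) (\<lambda>x. ennreal (normal_density 0 (sqrt (1/2)) x)))"

definition outage :: "'a measure \<Rightarrow> nat \<Rightarrow> real \<Rightarrow> ('a \<Rightarrow> nat \<Rightarrow> complex)
    \<Rightarrow> ((nat \<Rightarrow> complex) \<Rightarrow> (nat \<Rightarrow> complex)) \<Rightarrow> real" where
  "outage M t \<alpha> h x = measure M {\<omega> \<in> space M. (cmod (cinner t (x (h \<omega>)) (h \<omega>)))\<^sup>2 < \<alpha>}"

text \<open>Run of Scheme B starting at antenna i with n further antennas after i.
  Returns (selected antenna, list of trained antennas, list of feedback bits).\<close>
fun runB :: "real \<Rightarrow> (nat \<Rightarrow> complex) \<Rightarrow> nat \<Rightarrow> nat \<Rightarrow> nat \<times> nat list \<times> bool list" where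
  "runB \<alpha> h i 0 = (i, [i], [\<alpha> \<le> (cmod (h i))\<^sup>2])"
| "runB \<alpha> h i (Suc n) =
     (if \<alpha> \<le> (cmod (h i))\<^sup>2 then (i, [i], [True])
      else (case runB \<alpha> h (Suc i) n of (j, tr, bs) \<Rightarrow> (j, i # tr, False # bs)))"

definition schemeB :: "nat \<Rightarrow> real \<Rightarrow> (nat \<Rightarrow> complex) \<Rightarrow> nat \<times> nat list \<times> bool list" where
  "schemeB t \<alpha> h = runB \<alpha> h 0 (t - 1)"

definition schemeB_bf :: "nat \<Rightarrow> real \<Rightarrow> (nat \<Rightarrow> complex) \<Rightarrow> nat \<Rightarrow> complex" where
  "schemeB_bf t \<alpha> h = basis_vec (fst (schemeB t \<alpha> h))"

definition tlB :: "'a measure \<Rightarrow> nat \<Rightarrow> real \<Rightarrow> ('a \<Rightarrow> nat \<Rightarrow> complex) \<Rightarrow> real" where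
  "tlB M t \<alpha> h = (\<integral>\<omega>. real (length (fst (snd (schemeB t \<alpha> (h \<omega>))))) \<partial>M)"

definition frB :: "'a measure \<Rightarrow> nat \<Rightarrow> real \<Rightarrow> ('a \<Rightarrow> nat \<Rightarrow> complex) \<Rightarrow> real" where
  "frB M t \<alpha> h = (\<integral>\<omega>. real (length (snd (snd (schemeB t \<alpha> (h \<omega>))))) \<partial>M)"

definition schemeA_bf :: "nat \<Rightarrow> (nat \<Rightarrow> complex) \<Rightarrow> nat \<Rightarrow> complex" where
  "schemeA_bf t h = basis_vec (ARG_MAX (\<lambda>i. cmod (h i)) i. i < t)"

end

theory Submission
  imports Defs
begin


lemma deriv_aux:
  fixes k x :: real assumes k: "k > 0"
  shows "((\<lambda>x. - exp (- x\<^sup>2 * k) / (2 * k)) has_real_derivative x * exp (- x\<^sup>2 * k)) (at x)"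
proof -
  have "((\<lambda>x. - exp (- x\<^sup>2 * k) / (2 * k)) has_real_derivative - (exp (- x\<^sup>2 * k) * (- (2 * x * k))) / (2 * k)) (at x)"
    by (auto intro!: derivative_eq_intros simp: power2_eq_square)
  also have "- (exp (- x\<^sup>2 * k) * (- (2 * x * k))) / (2 * k) = x * exp (- x\<^sup>2 * k)"
    using k by (simp add: field_simps)
  finally show ?thesis .
qed

lemma inner_quad:
  fixes \<alpha> s :: real assumes a: "\<alpha> > 0"
  shows "(\<integral>\<^sup>+x. ennreal (x * exp (- x\<^sup>2 * (1 + s\<^sup>2))) * indicator {0<..} x * indicator {..<\<alpha>} (x\<^sup>2 * (1 + s\<^sup>2)) \<partial>lborel)
     = ennreal ((1 - exp (-\<alpha>)) / (2 * (1 + s\<^sup>2)))"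
proof -
  define c where "c = sqrt (\<alpha> / (1 + s\<^sup>2))"
  have s0: "1 + s\<^sup>2 > 0" by (simp add: add_pos_nonneg)
  have c0: "c > 0" using a s0 by (simp add: c_def)
  have cc: "c\<^sup>2 * (1 + s\<^sup>2) = \<alpha>" using a s0 by (simp add: c_def)
  have lt: "x\<^sup>2 * (1 + s\<^sup>2) < \<alpha> \<longleftrightarrow> x < c" if "x \<ge> 0" for x
  proof -
    have "x\<^sup>2 * (1 + s\<^sup>2) < \<alpha> \<longleftrightarrow> x\<^sup>2 < c\<^sup>2" unfolding cc[symmetric] using s0 by (rule mult_less_cancel_right_pos)
    also have "\<dots> \<longleftrightarrow> x < c"
    proof -
      have "c\<^sup>2 \<le> x\<^sup>2 \<longleftrightarrow> c \<le> x" using c0 that by simp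
      then show ?thesis by (metis not_le)
    qed
    finally show ?thesis .
  qed
  have "(\<integral>\<^sup>+x. ennreal (x * exp (- x\<^sup>2 * (1 + s\<^sup>2))) * indicator {0<..} x * indicator {..<\<alpha>} (x\<^sup>2 * (1 + s\<^sup>2)) \<partial>lborel)
     = (\<integral>\<^sup>+x. ennreal (x * exp (- x\<^sup>2 * (1 + s\<^sup>2))) * indicator {0..c} x \<partial>lborel)"
  proof (rule nn_integral_cong_AE)
    show "AE x in lborel. ennreal (x * exp (- x\<^sup>2 * (1 + s\<^sup>2))) * indicator {0<..} x * indicator {..<\<alpha>} (x\<^sup>2 * (1 + s\<^sup>2)) =
         ennreal (x * exp (- x\<^sup>2 * (1 + s\<^sup>2))) * indicator {0..c} x"
      using AE_lborel_singleton[of c]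
    proof eventually_elim
      case (elim x)
      show ?case
      proof (cases "x > 0")
        case True then show ?thesis using lt[of x] elim by (auto simp: indicator_def)
      next
        case False then show ?thesis by (auto simp: indicator_def ennreal_neg)
      qed
    qed
  qed
  also have "\<dots> = ennreal ((- exp (- c\<^sup>2 * (1 + s\<^sup>2)) / (2 * (1 + s\<^sup>2))) - (- exp (- 0\<^sup>2 * (1 + s\<^sup>2)) / (2 * (1 + s\<^sup>2))))"
    by (rule nn_integral_FTC_Icc[where F = "\<lambda>x. - exp (- x\<^sup>2 * (1 + s\<^sup>2)) / (2 * (1 + s\<^sup>2))"])
       (use c0 s0 deriv_aux[OF s0] in \<open>auto simp: zero_le_mult_iff\<close>)
  also have "\<dots> = ennreal ((1 - exp (-\<alpha>)) / (2 * (1 + s\<^sup>2)))"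
    using cc by (simp add: diff_divide_distrib)
  finally show ?thesis .
qed

lemma quad:
  fixes \<alpha> :: real assumes a: "\<alpha> > 0"
  shows "(\<integral>\<^sup>+x. \<integral>\<^sup>+y. ennreal (exp (- x\<^sup>2) * exp (- y\<^sup>2)) * indicator {0<..} x * indicator {0<..} y * indicator {..<\<alpha>} (x\<^sup>2 + y\<^sup>2) \<partial>lborel \<partial>lborel)
     = ennreal (pi / 4 * (1 - exp (-\<alpha>)))"
proof -
  let ?I = "indicator {0<..} :: real \<Rightarrow> ennreal"
  let ?ff = "\<lambda>x s. ennreal (x * exp (- x\<^sup>2 * (1 + s\<^sup>2))) * ?I x * ?I s * indicator {..<\<alpha>} (x\<^sup>2 * (1 + s\<^sup>2))"
  have "(\<integral>\<^sup>+x. \<integral>\<^sup>+y. ennreal (exp (- x\<^sup>2) * exp (- y\<^sup>2)) * ?I x * ?I y * indicator {..<\<alpha>} (x\<^sup>2 + y\<^sup>2) \<partial>lborel \<partial>lborel)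
      = (\<integral>\<^sup>+x. \<integral>\<^sup>+s. ?ff x s \<partial>lborel \<partial>lborel)"
  proof (rule nn_integral_cong)
    fix x :: real
    show "(\<integral>\<^sup>+y. ennreal (exp (- x\<^sup>2) * exp (- y\<^sup>2)) * ?I x * ?I y * indicator {..<\<alpha>} (x\<^sup>2 + y\<^sup>2) \<partial>lborel)
       = (\<integral>\<^sup>+s. ?ff x s \<partial>lborel)"
    proof (cases "x > 0")
      case False
      then show ?thesis by (simp add: indicator_def)
    next
      case True
      have "(\<integral>\<^sup>+y. ennreal (exp (- x\<^sup>2) * exp (- y\<^sup>2)) * ?I x * ?I y * indicator {..<\<alpha>} (x\<^sup>2 + y\<^sup>2) \<partial>lborel)
        = \<bar>x\<bar> * (\<integral>\<^sup>+s. ennreal (exp (- x\<^sup>2) * exp (- (0 + x * s)\<^sup>2)) * ?I x * ?I (0 + x * s) * indicator {..<\<alpha>} (x\<^sup>2 + (0 + x * s)\<^sup>2) \<partial>lborel)"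
        using True by (intro nn_integral_real_affine) auto
      also have "\<dots> = (\<integral>\<^sup>+s. ennreal x * (ennreal (exp (- x\<^sup>2) * exp (- (0 + x * s)\<^sup>2)) * ?I x * ?I (0 + x * s) * indicator {..<\<alpha>} (x\<^sup>2 + (0 + x * s)\<^sup>2)) \<partial>lborel)"
        using True by (subst nn_integral_cmult) auto
      also have "\<dots> = (\<integral>\<^sup>+s. ?ff x s \<partial>lborel)"
      proof (rule nn_integral_cong)
        fix s :: real
        have e: "exp (- x\<^sup>2) * exp (- (0 + x * s)\<^sup>2) = exp (- x\<^sup>2 * (1 + s\<^sup>2))"
          by (simp add: mult_exp_exp algebra_simps power_mult_distrib)
        have i: "x\<^sup>2 + (0 + x * s)\<^sup>2 = x\<^sup>2 * (1 + s\<^sup>2)" by (simp add: algebra_simps power_mult_distrib)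
        have p: "?I (0 + x * s) = ?I s" using True by (simp add: indicator_def zero_less_mult_iff)
        show "ennreal x * (ennreal (exp (- x\<^sup>2) * exp (- (0 + x * s)\<^sup>2)) * ?I x * ?I (0 + x * s) * indicator {..<\<alpha>} (x\<^sup>2 + (0 + x * s)\<^sup>2)) = ?ff x s"
          using True unfolding e i p by (simp add: indicator_def ennreal_mult)
      qed
      finally show ?thesis .
    qed
  qed
  also have "\<dots> = (\<integral>\<^sup>+s. \<integral>\<^sup>+x. ?ff x s \<partial>lborel \<partial>lborel)"
    by (rule lborel_pair.Fubini'[symmetric]) auto
  also have "\<dots> = (\<integral>\<^sup>+s. ennreal ((1 - exp (-\<alpha>)) / (2 * (1 + s\<^sup>2))) * indicator {0..} s \<partial>lborel)"
  proof (rule nn_integral_cong_AE)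
    show "AE s in lborel. (\<integral>\<^sup>+x. ?ff x s \<partial>lborel) = ennreal ((1 - exp (-\<alpha>)) / (2 * (1 + s\<^sup>2))) * indicator {0..} s"
      using AE_lborel_singleton[of 0]
    proof eventually_elim
      case (elim s)
      show ?case
      proof (cases "s > 0")
        case False then show ?thesis using elim by (simp add: indicator_def)
      next
        case True
        have "(\<integral>\<^sup>+x. ?ff x s \<partial>lborel) = (\<integral>\<^sup>+x. ennreal (x * exp (- x\<^sup>2 * (1 + s\<^sup>2))) * indicator {0<..} x * indicator {..<\<alpha>} (x\<^sup>2 * (1 + s\<^sup>2)) \<partial>lborel)"
          using True by (intro nn_integral_cong) (simp add: indicator_def)
        also have "\<dots> = ennreal ((1 - exp (-\<alpha>)) / (2 * (1 + s\<^sup>2)))" by (rule inner_quad[OF a])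
        finally show ?thesis using True by (simp add: indicator_def)
      qed
    qed
  qed
  also have "\<dots> = ennreal ((1 - exp (-\<alpha>)) / 2 * (pi / 2) - (1 - exp (-\<alpha>)) / 2 * arctan 0)"
  proof (rule nn_integral_FTC_atLeast[where F = "\<lambda>s. (1 - exp (-\<alpha>)) / 2 * arctan s"])
    show "((\<lambda>s. (1 - exp (-\<alpha>)) / 2 * arctan s) \<longlongrightarrow> (1 - exp (-\<alpha>)) / 2 * (pi / 2)) at_top"
      by (intro tendsto_intros tendsto_arctan_at_top)
  next
    fix x :: real
    have "exp (-\<alpha>) < 1" using a by simp
    then show "0 \<le> (1 - exp (-\<alpha>)) / (2 * (1 + x\<^sup>2))" by (simp add: add_pos_nonneg)
  next
    fix x :: real
    show "((\<lambda>s. (1 - exp (-\<alpha>)) / 2 * arctan s) has_real_derivative (1 - exp (-\<alpha>)) / (2 * (1 + x\<^sup>2))) (at x)"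
      by (auto intro!: derivative_eq_intros simp: field_simps add_nonneg_eq_0_iff power2_eq_square)
  qed auto
  also have "\<dots> = ennreal (pi / 4 * (1 - exp (-\<alpha>)))" by (simp add: mult.commute)
  finally show ?thesis .
qed

lemma even_split:
  fixes f :: "real \<Rightarrow> ennreal"
  assumes f[measurable]: "f \<in> borel_measurable borel" and ev: "\<And>y. f (- y) = f y"
  shows "(\<integral>\<^sup>+y. f y \<partial>lborel) = 2 * (\<integral>\<^sup>+y. f y * indicator {0<..} y \<partial>lborel)"
proof -
  have "(\<integral>\<^sup>+y. f y \<partial>lborel) = (\<integral>\<^sup>+y. f y * indicator {0<..} y + f y * indicator {..<0} y \<partial>lborel)"
    by (rule nn_integral_cong_AE) (use AE_lborel_singleton[of 0] in \<open>eventually_elim, auto simp: indicator_def\<close>)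
  also have "\<dots> = (\<integral>\<^sup>+y. f y * indicator {0<..} y \<partial>lborel) + (\<integral>\<^sup>+y. f y * indicator {..<0} y \<partial>lborel)"
    by (rule nn_integral_add) auto
  also have "(\<integral>\<^sup>+y. f y * indicator {..<0} y \<partial>lborel) = ennreal \<bar>-1\<bar> * (\<integral>\<^sup>+y. f (0 + -1 * y) * indicator {..<0} (0 + -1 * y) \<partial>lborel)"
    by (rule nn_integral_real_affine) auto
  also have "\<dots> = (\<integral>\<^sup>+y. f y * indicator {0<..} y \<partial>lborel)"
    by (simp add: ev indicator_def)
  finally show ?thesis by (simp add: mult_2)
qed

lemma full_plane:
  fixes \<alpha> :: real assumes a: "\<alpha> > 0"
  shows "(\<integral>\<^sup>+x. \<integral>\<^sup>+y. ennreal (exp (- x\<^sup>2) * exp (- y\<^sup>2)) * indicator {..<\<alpha>} (x\<^sup>2 + y\<^sup>2) \<partial>lborel \<partial>lborel)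
     = ennreal (pi * (1 - exp (-\<alpha>)))"
proof -
  let ?I = "indicator {0<..} :: real \<Rightarrow> ennreal"
  let ?g = "\<lambda>x y. ennreal (exp (- x\<^sup>2) * exp (- y\<^sup>2)) * indicator {..<\<alpha>} (x\<^sup>2 + y\<^sup>2)"
  have "(\<integral>\<^sup>+x. \<integral>\<^sup>+y. ?g x y \<partial>lborel \<partial>lborel) = (\<integral>\<^sup>+x. 2 * (\<integral>\<^sup>+y. ?g x y * ?I y \<partial>lborel) \<partial>lborel)"
    by (intro nn_integral_cong even_split) auto
  also have "\<dots> = 2 * (\<integral>\<^sup>+x. (\<integral>\<^sup>+y. ?g x y * ?I y \<partial>lborel) \<partial>lborel)"
    by (rule nn_integral_cmult) measurable
  also have "(\<integral>\<^sup>+x. (\<integral>\<^sup>+y. ?g x y * ?I y \<partial>lborel) \<partial>lborel) = 2 * (\<integral>\<^sup>+x. (\<integral>\<^sup>+y. ?g x y * ?I y \<partial>lborel) * ?I x \<partial>lborel)"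
    by (rule even_split) auto
  also have "(\<integral>\<^sup>+x. (\<integral>\<^sup>+y. ?g x y * ?I y \<partial>lborel) * ?I x \<partial>lborel)
     = (\<integral>\<^sup>+x. \<integral>\<^sup>+y. ennreal (exp (- x\<^sup>2) * exp (- y\<^sup>2)) * ?I x * ?I y * indicator {..<\<alpha>} (x\<^sup>2 + y\<^sup>2) \<partial>lborel \<partial>lborel)"
    apply (intro nn_integral_cong)
    apply (subst nn_integral_multc[symmetric])
     apply measurable
    apply (intro nn_integral_cong)
    apply (simp add: ac_simps)
    done
  also have "\<dots> = ennreal (pi / 4 * (1 - exp (-\<alpha>)))" by (rule quad[OF a])
  finally have "(\<integral>\<^sup>+x. \<integral>\<^sup>+y. ?g x y \<partial>lborel \<partial>lborel) = 4 * ennreal (pi / 4 * (1 - exp (-\<alpha>)))"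
    by (simp add: mult.assoc[symmetric])
  also have "\<dots> = ennreal (4 * (pi / 4 * (1 - exp (-\<alpha>))))"
    by (subst ennreal_mult) (use a in auto)
  also have "\<dots> = ennreal (pi * (1 - exp (-\<alpha>)))"
    by simp
  finally show ?thesis .
qed



lemma normal_half: "normal_density 0 (sqrt (1/2)) x = exp (- x\<^sup>2) / sqrt pi"
  by (simp add: normal_density_def)

lemma indep_events_gauss:
  assumes P: "prob_space M" and sc: "std_complex_gaussian_vec M t h"
  shows "prob_space.indep_events M (\<lambda>j. {\<omega>\<in>space M. (cmod (h \<omega> j))\<^sup>2 < \<alpha>}) {..<t}"
proof -
  interpret prob_space M by (rule P)
  let ?Z = "\<lambda>(i, b) \<omega>. if b then Re (h \<omega> i) else Im (h \<omega> i)"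
  let ?K = "\<lambda>j::nat. {j} \<times> (UNIV :: bool set)"
  have ind: "indep_vars (\<lambda>_. borel) ?Z ({..<t} \<times> UNIV)"
    using sc unfolding std_complex_gaussian_vec_def by blast
  have ind2: "indep_vars (\<lambda>j. PiM (?K j) (\<lambda>_. borel)) (\<lambda>j \<omega>. restrict (\<lambda>i. ?Z i \<omega>) (?K j)) {..<t}"
    by (rule indep_vars_restrict[OF ind]) (auto simp: disjoint_family_on_def)
  have "indep_events (\<lambda>j. {\<omega>\<in>space M. (\<lambda>f. (f (j, True))\<^sup>2 + (f (j, False))\<^sup>2 < \<alpha>) (restrict (\<lambda>i. ?Z i \<omega>) (?K j))}) {..<t}"
    by (rule indep_eventsI_indep_vars[OF ind2]) measurable
  also have "(\<lambda>j. {\<omega>\<in>space M. (\<lambda>f. (f (j, True))\<^sup>2 + (f (j, False))\<^sup>2 < \<alpha>) (restrict (\<lambda>i. ?Z i \<omega>) (?K j))})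
     = (\<lambda>j. {\<omega>\<in>space M. (cmod (h \<omega> j))\<^sup>2 < \<alpha>})"
    by (auto simp: fun_eq_iff cmod_power2)
  finally show ?thesis .
qed

lemma prob_gauss:
  assumes P: "prob_space M" and sc: "std_complex_gaussian_vec M t h" and j: "j < t" and a: "\<alpha> > 0"
  shows "measure M {\<omega>\<in>space M. (cmod (h \<omega> j))\<^sup>2 < \<alpha>} = 1 - exp (-\<alpha>)"
proof -
  interpret prob_space M by (rule P)
  let ?Z = "\<lambda>(i, b) \<omega>. if b then Re (h \<omega> i) else Im (h \<omega> i)"
  let ?X = "\<lambda>\<omega>. Re (h \<omega> j)" and ?Y = "\<lambda>\<omega>. Im (h \<omega> j)"
  let ?\<phi> = "\<lambda>x. ennreal (normal_density 0 (sqrt (1/2)) x)"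
  have ind: "indep_vars (\<lambda>_. borel) ?Z ({..<t} \<times> UNIV)"
    using sc unfolding std_complex_gaussian_vec_def by blast
  have dX: "distributed M lborel ?X ?\<phi>" and dY: "distributed M lborel ?Y ?\<phi>"
    using sc j unfolding std_complex_gaussian_vec_def by auto
  have iv: "indep_var (PiM {(j, True)} (\<lambda>_. borel)) (\<lambda>\<omega>. restrict (\<lambda>i. ?Z i \<omega>) {(j, True)})
                      (PiM {(j, False)} (\<lambda>_. borel)) (\<lambda>\<omega>. restrict (\<lambda>i. ?Z i \<omega>) {(j, False)})"
    by (rule indep_var_restrict[OF ind]) (use j in auto)
  have "indep_var lborel ((\<lambda>f. f (j, True)) \<circ> (\<lambda>\<omega>. restrict (\<lambda>i. ?Z i \<omega>) {(j, True)}))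
                  lborel ((\<lambda>f. f (j, False)) \<circ> (\<lambda>\<omega>. restrict (\<lambda>i. ?Z i \<omega>) {(j, False)}))"
    by (rule indep_var_compose[OF iv]) simp_all
  also have "((\<lambda>f. f (j, True)) \<circ> (\<lambda>\<omega>. restrict (\<lambda>i. ?Z i \<omega>) {(j, True)})) = ?X"
    by (simp add: fun_eq_iff)
  also have "((\<lambda>f. f (j, False)) \<circ> (\<lambda>\<omega>. restrict (\<lambda>i. ?Z i \<omega>) {(j, False)})) = ?Y"
    by (simp add: fun_eq_iff)
  finally have ivXY: "indep_var lborel ?X lborel ?Y" .
  have joint: "distributed M (lborel \<Otimes>\<^sub>M lborel) (\<lambda>\<omega>. (?X \<omega>, ?Y \<omega>)) (\<lambda>(x, y). ?\<phi> x * ?\<phi> y)"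
    by (rule distributed_joint_indep[OF _ _ dX dY ivXY]) (auto intro: lborel.sigma_finite_measure_axioms)
  define D where "D = {p :: real \<times> real. (fst p)\<^sup>2 + (snd p)\<^sup>2 < \<alpha>}"
  have D[measurable]: "D \<in> sets (lborel \<Otimes>\<^sub>M lborel)"
  proof -
    have "open D" unfolding D_def by (intro open_Collect_less continuous_intros)
    then have "D \<in> sets (borel \<Otimes>\<^sub>M borel)" unfolding borel_prod by auto
    then show ?thesis by simp
  qed
  have ev: "{\<omega>\<in>space M. (cmod (h \<omega> j))\<^sup>2 < \<alpha>} = (\<lambda>\<omega>. (?X \<omega>, ?Y \<omega>)) -` D \<inter> space M"
    by (auto simp: D_def cmod_power2)
  have "emeasure M {\<omega>\<in>space M. (cmod (h \<omega> j))\<^sup>2 < \<alpha>} = (\<integral>\<^sup>+z. (\<lambda>(x, y). ?\<phi> x * ?\<phi> y) z * indicator D z \<partial>(lborel \<Otimes>\<^sub>M lborel))"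
    unfolding ev by (rule distributed_emeasure[OF joint D])
  also have "\<dots> = (\<integral>\<^sup>+x. \<integral>\<^sup>+y. (\<lambda>(x, y). ?\<phi> x * ?\<phi> y) (x, y) * indicator D (x, y) \<partial>lborel \<partial>lborel)"
  proof -
    have m: "(\<lambda>z. (\<lambda>(x, y). ?\<phi> x * ?\<phi> y) z * indicator D z) \<in> borel_measurable (lborel \<Otimes>\<^sub>M lborel)"
      by measurable
    show ?thesis using sigma_finite_measure.nn_integral_fst[OF lborel.sigma_finite_measure_axioms m] by simp
  qed
  also have "\<dots> = (\<integral>\<^sup>+x. \<integral>\<^sup>+y. ennreal (1 / pi) * (ennreal (exp (- x\<^sup>2) * exp (- y\<^sup>2)) * indicator {..<\<alpha>} (x\<^sup>2 + y\<^sup>2)) \<partial>lborel \<partial>lborel)"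
  proof (intro nn_integral_cong)
    fix x y :: real
    have "?\<phi> x * ?\<phi> y = ennreal (1 / pi * (exp (- x\<^sup>2) * exp (- y\<^sup>2)))"
      by (simp add: normal_half ennreal_mult[symmetric] field_simps)
    also have "\<dots> = ennreal (1 / pi) * ennreal (exp (- x\<^sup>2) * exp (- y\<^sup>2))"
      by (rule ennreal_mult) auto
    finally show "(\<lambda>(x, y). ?\<phi> x * ?\<phi> y) (x, y) * indicator D (x, y) = ennreal (1 / pi) * (ennreal (exp (- x\<^sup>2) * exp (- y\<^sup>2)) * indicator {..<\<alpha>} (x\<^sup>2 + y\<^sup>2))"
      by (simp add: D_def indicator_def)
  qed
  also have "\<dots> = ennreal (1 / pi) * (\<integral>\<^sup>+x. \<integral>\<^sup>+y. ennreal (exp (- x\<^sup>2) * exp (- y\<^sup>2)) * indicator {..<\<alpha>} (x\<^sup>2 + y\<^sup>2) \<partial>lborel \<partial>lborel)"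
    apply (subst nn_integral_cmult[symmetric])
     apply measurable
    apply (intro nn_integral_cong)
    apply (subst nn_integral_cmult)
     apply measurable
    done
  also have "\<dots> = ennreal (1 / pi) * ennreal (pi * (1 - exp (-\<alpha>)))"
    by (simp only: full_plane[OF a])
  also have "\<dots> = ennreal (1 - exp (-\<alpha>))"
    by (subst ennreal_mult[symmetric]) (use a in auto)
  finally have "emeasure M {\<omega>\<in>space M. (cmod (h \<omega> j))\<^sup>2 < \<alpha>} = ennreal (1 - exp (-\<alpha>))" .
  then show ?thesis
    by (simp add: emeasure_eq_measure) (use a in auto)
qed



lemma ex_le_Suc_shift: "(\<exists>j\<le>Suc n. Q j) \<longleftrightarrow> Q 0 \<or> (\<exists>j\<le>n. Q (Suc j))"
proof
  assume "\<exists>j\<le>Suc n. Q j"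
  then obtain j where "j \<le> Suc n" "Q j" by blast
  then show "Q 0 \<or> (\<exists>j\<le>n. Q (Suc j))" by (cases j) auto
qed auto

lemma all_less_Suc_shift: "(\<forall>j<Suc k. Q j) \<longleftrightarrow> Q 0 \<and> (\<forall>j<k. Q (Suc j))"
proof
  assume "Q 0 \<and> (\<forall>j<k. Q (Suc j))"
  then show "\<forall>j<Suc k. Q j" by (auto simp: less_Suc_eq_0_disj)
qed auto

lemma runB_fst_bounds: "i \<le> fst (runB \<alpha> g i n) \<and> fst (runB \<alpha> g i n) \<le> i + n"
proof (induction n arbitrary: i)
  case 0 then show ?case by simp
next
  case (Suc n)
  from Suc[of "Suc i"] show ?case by (auto simp: case_prod_beta)
qed

lemma runB_fst_ok: "(\<alpha> \<le> (cmod (g (fst (runB \<alpha> g i n))))\<^sup>2) \<longleftrightarrow> (\<exists>j\<le>n. \<alpha> \<le> (cmod (g (i + j)))\<^sup>2)"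
proof (induction n arbitrary: i)
  case 0 then show ?case by simp
next
  case (Suc n)
  show ?case
  proof (cases "\<alpha> \<le> (cmod (g i))\<^sup>2")
    case True then show ?thesis by auto
  next
    case False
    then have "fst (runB \<alpha> g i (Suc n)) = fst (runB \<alpha> g (Suc i) n)" by (simp add: case_prod_beta)
    then show ?thesis using False Suc[of "Suc i"] by (simp add: ex_le_Suc_shift)
  qed
qed

lemma runB_len: "real (length (fst (snd (runB \<alpha> g i n)))) = (\<Sum>k\<le>n. if (\<forall>j<k. (cmod (g (i + j)))\<^sup>2 < \<alpha>) then 1 else 0)"
proof (induction n arbitrary: i)
  case 0 then show ?case by simp
next
  case (Suc n)
  show ?case
  proof (cases "\<alpha> \<le> (cmod (g i))\<^sup>2")
    case True then show ?thesis by (simp add: sum.atMost_Suc_shift all_less_Suc_shift del: sum.atMost_Suc)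
  next
    case False
    then have "length (fst (snd (runB \<alpha> g i (Suc n)))) = Suc (length (fst (snd (runB \<alpha> g (Suc i) n))))"
      by (simp add: case_prod_beta)
    then show ?thesis using False Suc[of "Suc i"]
      by (simp add: sum.atMost_Suc_shift all_less_Suc_shift del: sum.atMost_Suc)
  qed
qed

lemma runB_len_bs: "length (snd (snd (runB \<alpha> g i n))) = length (fst (snd (runB \<alpha> g i n)))"
  by (induction n arbitrary: i) (auto simp: case_prod_beta)

lemma cinner_basis: "j < t \<Longrightarrow> cinner t (basis_vec j) g = g j"
proof -
  assume j: "j < t"
  have "cinner t (basis_vec j) g = (\<Sum>i<t. if i = j then g i else 0)"
    unfolding cinner_def by (intro sum.cong) (auto simp: basis_vec_def)
  also have "\<dots> = g j" using j by (simp add: sum.delta)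
  finally show ?thesis .
qed

lemma argmax_prop:
  fixes g :: "nat \<Rightarrow> complex" assumes t: "t \<ge> 1"
  shows "(ARG_MAX (\<lambda>i. cmod (g i)) i. i < t) < t \<and> (\<forall>i<t. cmod (g i) \<le> cmod (g (ARG_MAX (\<lambda>i. cmod (g i)) i. i < t)))"
proof -
  let ?S = "(\<lambda>i. cmod (g i)) ` {..<t}"
  have fin: "finite ?S" by auto
  have "0 \<in> {..<t}" using t by simp
  then have ne: "?S \<noteq> {}" by blast
  have "Max ?S \<in> ?S" using Max_in[OF fin ne] .
  then obtain k where k: "k < t" "cmod (g k) = Max ?S" by auto
  have ge: "\<forall>i<t. cmod (g i) \<le> cmod (g k)" using k fin by auto
  show ?thesis
    by (rule arg_maxI[where x = k]) (use k ge in \<open>auto simp: not_less\<close>)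
qed



theorem theorem1:
  fixes M :: "'a measure" and t :: nat and \<alpha> :: real and h :: "'a \<Rightarrow> nat \<Rightarrow> complex"
  assumes "prob_space M" and "t \<ge> 1" and "\<alpha> > 0"
    and "std_complex_gaussian_vec M t h"
  shows "outage M t \<alpha> h (schemeB_bf t \<alpha>) = (1 - exp (-\<alpha>)) ^ t
    \<and> outage M t \<alpha> h (schemeA_bf t) = (1 - exp (-\<alpha>)) ^ t
    \<and> tlB M t \<alpha> h = exp \<alpha> * (1 - (1 - exp (-\<alpha>)) ^ t)
    \<and> frB M t \<alpha> h = exp \<alpha> * (1 - (1 - exp (-\<alpha>)) ^ t)
    \<and> exp \<alpha> * (1 - (1 - exp (-\<alpha>)) ^ t) < exp \<alpha>"
proof -
  note P = assms(1) and t = assms(2) and a = assms(3) and sc = assms(4)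
  interpret prob_space M by (rule P)
  define p where "p = 1 - exp (-\<alpha>)"
  have p0: "0 < p" and p1: "p < 1" using a by (auto simp: p_def)
  define A where "A j = {\<omega>\<in>space M. (cmod (h \<omega> j))\<^sup>2 < \<alpha>}" for j
  have indep: "indep_events A {..<t}"
    unfolding A_def by (rule indep_events_gauss[OF P sc])
  have pA: "prob (A j) = p" if "j < t" for j
    unfolding A_def p_def by (rule prob_gauss[OF P sc that a])
  define B where "B k = {\<omega>\<in>space M. \<forall>j<k. (cmod (h \<omega> j))\<^sup>2 < \<alpha>}" for k
  have B: "prob (B k) = p ^ k \<and> B k \<in> events" if k: "k \<le> t" for k
  proof (cases "k = 0")
    case True
    then have "B k = space M" by (auto simp: B_def)
    then show ?thesis using True by (simp add: prob_space)
  next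
    case False
    have eq: "B k = (\<Inter>j\<in>{..<k}. A j)"
      using False by (auto simp: B_def A_def)
    have "prob (\<Inter>j\<in>{..<k}. A j) = (\<Prod>j\<in>{..<k}. prob (A j))"
    proof -
      have "{..<k} \<subseteq> {..<t}" "{..<k} \<noteq> {}" "finite {..<k}" using k False by auto
      then show ?thesis using indep unfolding indep_events_def by blast
    qed
    also have "\<dots> = (\<Prod>j\<in>{..<k}. p)" using k by (intro prod.cong) (auto simp: pA)
    also have "\<dots> = p ^ k" by simp
    finally have 1: "prob (B k) = p ^ k" using eq by simp
    have "A ` {..<t} \<subseteq> events" using indep unfolding indep_events_def by auto
    then have "(\<Inter>j\<in>{..<k}. A j) \<in> events" using k False
      by (intro sets.finite_INT) auto
    then show ?thesis using 1 eq by simp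
  qed
  have oB: "outage M t \<alpha> h (schemeB_bf t \<alpha>) = p ^ t"
  proof -
    have key: "(cmod (cinner t (schemeB_bf t \<alpha> (h \<omega>)) (h \<omega>)))\<^sup>2 < \<alpha> \<longleftrightarrow> (\<forall>j<t. (cmod (h \<omega> j))\<^sup>2 < \<alpha>)" for \<omega>
    proof - let ?g = "h \<omega>"
      let ?J = "fst (runB \<alpha> ?g 0 (t - 1))"
      have J: "?J < t" using runB_fst_bounds[of 0 \<alpha> ?g "t - 1"] t by auto
      have "(cmod (cinner t (schemeB_bf t \<alpha> ?g) ?g))\<^sup>2 < \<alpha> \<longleftrightarrow> \<not> (\<alpha> \<le> (cmod (?g ?J))\<^sup>2)"
        unfolding schemeB_bf_def schemeB_def using J by (simp add: cinner_basis not_le)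
      also have "\<dots> \<longleftrightarrow> \<not> (\<exists>j\<le>t - 1. \<alpha> \<le> (cmod (?g (0 + j)))\<^sup>2)"
        by (simp only: runB_fst_ok)
      also have "\<dots> \<longleftrightarrow> (\<forall>j<t. (cmod (?g j))\<^sup>2 < \<alpha>)"
      proof -
        have tj: "j \<le> t - 1 \<longleftrightarrow> j < t" for j using t by auto
        have "(\<exists>j\<le>t - 1. \<alpha> \<le> (cmod (?g (0 + j)))\<^sup>2) \<longleftrightarrow> (\<exists>j<t. \<alpha> \<le> (cmod (?g j))\<^sup>2)"
          by (simp only: tj add_0)
        then show ?thesis by (auto simp: not_le)
      qed
      finally show "(cmod (cinner t (schemeB_bf t \<alpha> ?g) ?g))\<^sup>2 < \<alpha> \<longleftrightarrow> (\<forall>j<t. (cmod (?g j))\<^sup>2 < \<alpha>)" .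
    qed
    then have "{\<omega> \<in> space M. (cmod (cinner t (schemeB_bf t \<alpha> (h \<omega>)) (h \<omega>)))\<^sup>2 < \<alpha>} = B t"
      by (auto simp: B_def)
    then show ?thesis unfolding outage_def using B[of t] by simp
  qed
  have oA: "outage M t \<alpha> h (schemeA_bf t) = p ^ t"
  proof -
    have key: "(cmod (cinner t (schemeA_bf t (h \<omega>)) (h \<omega>)))\<^sup>2 < \<alpha> \<longleftrightarrow> (\<forall>j<t. (cmod (h \<omega> j))\<^sup>2 < \<alpha>)" for \<omega>
    proof - let ?g = "h \<omega>"
      let ?J = "ARG_MAX (\<lambda>i. cmod (?g i)) i. i < t"
      have J: "?J < t" and mx: "\<forall>i<t. cmod (?g i) \<le> cmod (?g ?J)" using argmax_prop[OF t, of ?g] by auto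
      have "(cmod (cinner t (schemeA_bf t ?g) ?g))\<^sup>2 < \<alpha> \<longleftrightarrow> (cmod (?g ?J))\<^sup>2 < \<alpha>"
        unfolding schemeA_bf_def using J by (simp add: cinner_basis)
      also have "\<dots> \<longleftrightarrow> (\<forall>j<t. (cmod (?g j))\<^sup>2 < \<alpha>)"
      proof
        assume l: "(cmod (?g ?J))\<^sup>2 < \<alpha>"
        show "\<forall>j<t. (cmod (?g j))\<^sup>2 < \<alpha>"
        proof (intro allI impI)
          fix j assume "j < t"
          then have "(cmod (?g j))\<^sup>2 \<le> (cmod (?g ?J))\<^sup>2" using mx by (intro power_mono) auto
          then show "(cmod (?g j))\<^sup>2 < \<alpha>" using l by linarith
        qed
      qed (use J in auto)
      finally show "(cmod (cinner t (schemeA_bf t ?g) ?g))\<^sup>2 < \<alpha> \<longleftrightarrow> (\<forall>j<t. (cmod (?g j))\<^sup>2 < \<alpha>)" .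
    qed
    then have "{\<omega> \<in> space M. (cmod (cinner t (schemeA_bf t (h \<omega>)) (h \<omega>)))\<^sup>2 < \<alpha>} = B t"
      by (auto simp: B_def)
    then show ?thesis unfolding outage_def using B[of t] by simp
  qed
  have len: "real (length (fst (snd (schemeB t \<alpha> (h \<omega>))))) = (\<Sum>k<t. indicator (B k) \<omega>)"
    if "\<omega> \<in> space M" for \<omega>
  proof -
    have tt: "{..t - 1} = {..<t}" using t by auto
    show ?thesis unfolding schemeB_def runB_len tt
      using that by (intro sum.cong) (auto simp: B_def indicator_def)
  qed
  have intB: "integrable M (\<lambda>\<omega>. indicator (B k) \<omega> :: real)" if "k < t" for k
  proof -
    have "B k \<in> events" using B that by auto
    then show ?thesis by (simp add: less_top[symmetric])
  qed
  have sumB: "(\<integral>\<omega>. (\<Sum>k<t. indicator (B k) \<omega> :: real) \<partial>M) = (\<Sum>k<t. p ^ k)"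
  proof -
    have "(\<integral>\<omega>. (\<Sum>k<t. indicator (B k) \<omega> :: real) \<partial>M) = (\<Sum>k<t. (\<integral>\<omega>. (indicator (B k) \<omega> :: real) \<partial>M))"
      by (rule Bochner_Integration.integral_sum) (use intB in auto)
    also have "\<dots> = (\<Sum>k<t. p ^ k)"
    proof (intro sum.cong refl)
      fix k assume "k \<in> {..<t}"
      then have kt: "k \<le> t" by simp
      have "prob (B k) = p ^ k" by (rule conjunct1[OF B[OF kt]])
      moreover have "B k \<inter> space M = B k" unfolding B_def by blast
      ultimately show "(\<integral>\<omega>. (indicator (B k) \<omega> :: real) \<partial>M) = p ^ k" using Bochner_Integration.integral_indicator[of M "B k"] by (simp only:)
    qed
    finally show ?thesis .
  qed
  have gp: "(\<Sum>k<t. p ^ k) = exp \<alpha> * (1 - p ^ t)"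
  proof -
    have "(\<Sum>k<t. p ^ k) = (1 - p ^ t) / (1 - p)" using p1 by (simp add: sum_gp_strict)
    also have "1 - p = exp (-\<alpha>)" by (simp add: p_def)
    finally show ?thesis by (simp add: exp_minus field_simps)
  qed
  have tl: "tlB M t \<alpha> h = exp \<alpha> * (1 - p ^ t)"
    unfolding tlB_def by (subst Bochner_Integration.integral_cong[OF refl len]) (use sumB gp in auto)
  have fr: "frB M t \<alpha> h = exp \<alpha> * (1 - p ^ t)"
    unfolding frB_def schemeB_def runB_len_bs using tl unfolding tlB_def schemeB_def .
  have ineq: "exp \<alpha> * (1 - p ^ t) < exp \<alpha>"
  proof -
    have "0 < exp \<alpha> * p ^ t" using p0 by simp
    then show ?thesis by (simp add: algebra_simps)
  qed
  show ?thesis using oA oB tl fr ineq unfolding p_def by simp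
qed


end
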